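(* Let $S=S^{\top}\in\mathbb{R}^{n\times n}$ be a nonnegative irreducible symmetric matrix and $K=-K^{\top}\in\mathbb{R}^{n\times n}$ a nonsingular skew-symmetric matrix such that $A=S+K\ge 0$ (entrywise). Then $n$ is even and $t\mapsto r\big((1-t)A+tA^{\top}\big)$, $t\in[0,1]$, is not constant.
   Context: $r(M)$ denotes the spectral radius of $M$. *)

theory Defs
  imports "Jordan_Normal_Form.Spectral_Radius"
begin

definition nonneg_mat :: "real mat \<Rightarrow> bool" where
  "nonneg_mat A \<longleftrightarrow> (\<forall>i<dim_row A. \<forall>j<dim_col A. A $$ (i,j) \<ge> 0)"

text \<open>A square matrix is reducible if there is a nonempty proper subset I of the
  index set such that all entries A(i,j) with i in I and j not in I vanish
  (i.e. after a permutation it is block triangular); irreducible otherwise.\<close>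
definition irreducible_mat :: "real mat \<Rightarrow> bool" where
  "irreducible_mat A \<longleftrightarrow> dim_row A = dim_col A \<and>
     \<not> (\<exists>I. I \<noteq> {} \<and> I \<subset> {0..<dim_row A} \<and>
            (\<forall>i\<in>I. \<forall>j\<in>{0..<dim_row A} - I. A $$ (i,j) = 0))"

definition spec_rad :: "real mat \<Rightarrow> real" where
  "spec_rad A = spectral_radius (map_mat complex_of_real A)"

end

theory Submission
  imports Defs
begin

definition mvf :: "nat \<Rightarrow> (nat \<Rightarrow> nat \<Rightarrow> real) \<Rightarrow> (nat \<Rightarrow> real) \<Rightarrow> nat \<Rightarrow> real" where
  "mvf n m f i = (\<Sum>j<n. m i j * f j)"
definition ipf :: "nat \<Rightarrow> (nat \<Rightarrow> real) \<Rightarrow> (nat \<Rightarrow> real) \<Rightarrow> real" where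
  "ipf n f g = (\<Sum>i<n. f i * g i)"

lemma ipf_sym: assumes "\<And>i j. i < n \<Longrightarrow> j < n \<Longrightarrow> m i j = m j i"
  shows "ipf n (mvf n m f) g = ipf n f (mvf n m g)"
proof -
  have "ipf n (mvf n m f) g = (\<Sum>i<n. \<Sum>j<n. m i j * f j * g i)"
    unfolding ipf_def mvf_def by (simp add: sum_distrib_right)
  also have "\<dots> = (\<Sum>j<n. \<Sum>i<n. m i j * f j * g i)" by (rule sum.swap)
  also have "\<dots> = (\<Sum>j<n. \<Sum>i<n. f j * (m j i * g i))"
    by (intro sum.cong refl) (simp add: assms mult.commute mult.left_commute)
  also have "\<dots> = ipf n f (mvf n m g)"
    unfolding ipf_def mvf_def by (simp add: sum_distrib_left)
  finally show ?thesis .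
qed

lemma ipf_nonneg: "ipf n f f \<ge> 0"
  unfolding ipf_def by (intro sum_nonneg) auto

lemma ipf_zero: "ipf n f f = 0 \<Longrightarrow> i < n \<Longrightarrow> f i = 0"
  unfolding ipf_def by (subst (asm) sum_nonneg_eq_0_iff) auto

lemma ipf_CS: "(ipf n f g)^2 \<le> ipf n f f * ipf n g g"
proof (cases "ipf n g g > 0")
  case False
  hence "ipf n g g = 0" using ipf_nonneg[of n g] by linarith
  hence "\<And>i. i < n \<Longrightarrow> g i = 0" using ipf_zero by blast
  hence "ipf n f g = 0" unfolding ipf_def by simp
  thus ?thesis using \<open>ipf n g g = 0\<close> by simp
next
  case True
  define r where "r = ipf n f g / ipf n g g"
  have "0 \<le> (\<Sum>i<n. (f i - r * g i)^2)" by (simp add: sum_nonneg)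
  also have "\<dots> = (\<Sum>i<n. f i * f i - 2 * r * (f i * g i) + r^2 * (g i * g i))"
    by (intro sum.cong refl) (simp add: power2_eq_square algebra_simps)
  also have "\<dots> = ipf n f f - 2 * r * ipf n f g + r^2 * ipf n g g"
    unfolding ipf_def by (simp add: sum.distrib sum_subtractf sum_distrib_left)
  also have "\<dots> = ipf n f f - (ipf n f g)^2 / ipf n g g"
    using True by (simp add: r_def power2_eq_square field_simps)
  finally show ?thesis using True by (simp add: field_simps)
qed

lemma psd_kernel:
  assumes sym: "\<And>i j. i < n \<Longrightarrow> j < n \<Longrightarrow> m i j = m j i"
    and psd: "\<And>f. ipf n f (mvf n m f) \<ge> 0"
    and u: "ipf n u (mvf n m u) = 0"
    and i: "i < n"
  shows "mvf n m u i = 0"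
proof -
  define w where "w = mvf n m u"
  define c where "c = ipf n w (mvf n m w)"
  have c0: "c \<ge> 0" unfolding c_def by (rule psd)
  have exp: "ipf n (\<lambda>k. u k - s * w k) (mvf n m (\<lambda>k. u k - s * w k))
      = ipf n u (mvf n m u) - 2 * s * ipf n w w + s^2 * c" for s
  proof -
    have lin: "mvf n m (\<lambda>k. u k - s * w k) = (\<lambda>k. mvf n m u k - s * mvf n m w k)"
      unfolding mvf_def by (auto simp: right_diff_distrib sum_subtractf sum_distrib_left mult.left_commute)
    have a: "ipf n w (mvf n m u) = ipf n (mvf n m u) w"
      unfolding ipf_def by (simp add: mult.commute)
    have b: "ipf n u (mvf n m w) = ipf n (mvf n m u) w"
      using ipf_sym[OF sym, where f=u and g=w] by simp
    have "ipf n (\<lambda>k. u k - s * w k) (mvf n m (\<lambda>k. u k - s * w k))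
       = ipf n u (mvf n m u) - s * ipf n u (mvf n m w) - s * ipf n w (mvf n m u) + s^2 * c"
    proof -
      have "ipf n (\<lambda>k. u k - s * w k) (mvf n m (\<lambda>k. u k - s * w k))
        = (\<Sum>k<n. u k * mvf n m u k - s * (u k * mvf n m w k) - s * (w k * mvf n m u k)
             + s^2 * (w k * mvf n m w k))"
        unfolding lin ipf_def by (intro sum.cong refl) (simp add: power2_eq_square algebra_simps)
      also have "\<dots> = ipf n u (mvf n m u) - s * ipf n u (mvf n m w) - s * ipf n w (mvf n m u) + s^2 * c"
        unfolding c_def ipf_def by (simp add: sum.distrib sum_subtractf sum_distrib_left)
      finally show ?thesis .
    qed
    thus ?thesis using a b unfolding w_def by simp
  qed
  define N where "N = ipf n w w"
  have N0: "N \<ge> 0" unfolding N_def by (rule ipf_nonneg)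
  have "N = 0"
  proof (rule ccontr)
    assume "N \<noteq> 0"
    hence Np: "N > 0" using N0 by simp
    define s where "s = N / (c + 1)"
    have sp: "s > 0" using Np c0 unfolding s_def by simp
    have "0 \<le> - 2 * s * N + s^2 * c" using psd[of "\<lambda>k. u k - s * w k"] exp[of s] u
      unfolding N_def by simp
    hence "s * (2 * N) \<le> s * (s * c)" by (simp add: power2_eq_square algebra_simps)
    hence "2 * N \<le> s * c" using sp by simp
    moreover have "s * c < N" unfolding s_def using Np c0
      by (simp add: field_simps)
    ultimately show False using Np by simp
  qed
  thus ?thesis using ipf_zero[of n w i] i unfolding N_def w_def by simp
qed


lemma powers_repr:
  fixes S :: "real mat" and mu :: real
  assumes S: "S \<in> carrier_mat n n" and mu: "mu \<noteq> 0"
    and T: "T = map_mat (\<lambda>a. complex_of_real (a / mu)) S"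
    and i: "i < n"
  shows "(mvf n (\<lambda>i j. S $$ (i,j)) ^^ k) x i = mu ^ k * (\<Sum>j<n. Re ((T ^\<^sub>m k) $$ (i,j)) * x j)"
  using i
proof (induction k arbitrary: x i)
  case 0
  have "(\<Sum>j<n. Re ((T ^\<^sub>m 0) $$ (i,j)) * x j) = (\<Sum>j<n. (if i = j then x j else 0))"
    using 0 S T by (intro sum.cong refl) auto
  also have "\<dots> = x i" using 0 by simp
  finally show ?case by simp
next
  case (Suc k)
  let ?sm = "\<lambda>i j. S $$ (i,j)"
  have Tc: "T \<in> carrier_mat n n" using S T by auto
  have Tk: "T ^\<^sub>m k \<in> carrier_mat n n" using Tc by auto
  have "(mvf n ?sm ^^ Suc k) x i = (mvf n ?sm ^^ k) (mvf n ?sm x) i"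
    by (simp only: funpow_Suc_right comp_def)
  also have "\<dots> = mu ^ k * (\<Sum>l<n. Re ((T ^\<^sub>m k) $$ (i,l)) * mvf n ?sm x l)"
    using Suc.IH[where x="mvf n ?sm x" and i=i] Suc.prems by simp
  also have "\<dots> = mu ^ k * (\<Sum>l<n. Re ((T ^\<^sub>m k) $$ (i,l)) * (\<Sum>j<n. S $$ (l,j) * x j))"
    by (simp add: mvf_def)
  also have "\<dots> = mu ^ k * (\<Sum>l<n. \<Sum>j<n. Re ((T ^\<^sub>m k) $$ (i,l)) * S $$ (l,j) * x j)"
    by (simp add: sum_distrib_left mult.assoc)
  also have "\<dots> = mu ^ k * (\<Sum>j<n. \<Sum>l<n. Re ((T ^\<^sub>m k) $$ (i,l)) * S $$ (l,j) * x j)"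
    by (subst sum.swap) simp
  also have "\<dots> = mu ^ Suc k * (\<Sum>j<n. Re ((T ^\<^sub>m Suc k) $$ (i,j)) * x j)"
  proof -
    have "Re ((T ^\<^sub>m Suc k) $$ (i,j)) = (\<Sum>l<n. Re ((T ^\<^sub>m k) $$ (i,l)) * S $$ (l,j)) / mu"
      if j: "j < n" for j
    proof -
      have "(T ^\<^sub>m Suc k) $$ (i,j) = (\<Sum>l<n. (T ^\<^sub>m k) $$ (i,l) * T $$ (l,j))"
        using Tk Tc Suc.prems j by (simp add: scalar_prod_def lessThan_atLeast0)
      also have "\<dots> = (\<Sum>l<n. (T ^\<^sub>m k) $$ (i,l) * complex_of_real (S $$ (l,j) / mu))"
        using T S j by (intro sum.cong refl) auto
      finally have "Re ((T ^\<^sub>m Suc k) $$ (i,j)) = (\<Sum>l<n. Re ((T ^\<^sub>m k) $$ (i,l)) * (S $$ (l,j) / mu))"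
        by (simp add: Re_sum)
      thus ?thesis by (simp add: sum_divide_distrib)
    qed
    hence "(\<Sum>j<n. Re ((T ^\<^sub>m Suc k) $$ (i,j)) * x j)
        = (\<Sum>j<n. (\<Sum>l<n. Re ((T ^\<^sub>m k) $$ (i,l)) * S $$ (l,j) * x j) / mu)"
      by (auto simp: sum_distrib_right sum_divide_distrib intro!: sum.cong)
    also have "\<dots> = (\<Sum>j<n. \<Sum>l<n. Re ((T ^\<^sub>m k) $$ (i,l)) * S $$ (l,j) * x j) / mu"
      by (simp add: sum_divide_distrib)
    finally show ?thesis using mu by simp
  qed
  finally show ?case .
qed

lemma spec_rad_nonneg:
  assumes S: "S \<in> carrier_mat n n" and n: "n > 0"
  shows "spec_rad S \<ge> 0"
proof -
  have "spectral_radius (map_mat complex_of_real S) \<in> norm ` spectrum (map_mat complex_of_real S)"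
    using spectral_radius_mem_max(1)[of "map_mat complex_of_real S" n] S n by auto
  thus ?thesis unfolding spec_rad_def by auto
qed

lemma scaled_sr_less_1:
  fixes S :: "real mat" and mu :: real
  assumes S: "S \<in> carrier_mat n n" and n: "n > 0" and mu: "spec_rad S < mu"
    and T: "T = map_mat (\<lambda>a. complex_of_real (a / mu)) S"
  shows "spectral_radius T < 1"
proof -
  have mu0: "mu > 0" using spec_rad_nonneg[OF S n] mu by simp
  have Tc: "T \<in> carrier_mat n n" using S T by auto
  define CS where "CS = map_mat complex_of_real S"
  have CSc: "CS \<in> carrier_mat n n" using S CS_def by auto
  from spectral_radius_mem_max(1)[OF Tc n] obtain lam where
    lam: "lam \<in> spectrum T" and sr: "spectral_radius T = norm lam" by auto
  from lam obtain v where ev: "eigenvector T v lam"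
    unfolding spectrum_def eigenvalue_def by auto
  hence v: "v \<in> carrier_vec n" "v \<noteq> 0\<^sub>v n" "T *\<^sub>v v = lam \<cdot>\<^sub>v v"
    using Tc unfolding eigenvector_def by auto
  have "CS *\<^sub>v v = (complex_of_real mu * lam) \<cdot>\<^sub>v v"
  proof (rule eq_vecI)
    fix i assume "i < dim_vec ((complex_of_real mu * lam) \<cdot>\<^sub>v v)"
    hence i: "i < n" using v by auto
    have "(T *\<^sub>v v) $ i = lam * v $ i" using v(3) i v(1) by (metis carrier_vecD index_smult_vec(1))
    hence eq: "(\<Sum>j<n. complex_of_real (S $$ (i,j) / mu) * v $ j) = lam * v $ i"
      using i S T v(1) by (simp add: scalar_prod_def lessThan_atLeast0)
    have "(CS *\<^sub>v v) $ i = (\<Sum>j<n. complex_of_real (S $$ (i,j)) * v $ j)"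
      using i S v(1) CS_def by (simp add: scalar_prod_def lessThan_atLeast0)
    also have "\<dots> = complex_of_real mu * (\<Sum>j<n. complex_of_real (S $$ (i,j) / mu) * v $ j)"
      using mu0 by (simp add: sum_distrib_left)
    also have "\<dots> = ((complex_of_real mu * lam) \<cdot>\<^sub>v v) $ i" using eq i v(1) by simp
    finally show "(CS *\<^sub>v v) $ i = ((complex_of_real mu * lam) \<cdot>\<^sub>v v) $ i" .
  qed (use v CSc in auto)
  hence "eigenvector CS v (complex_of_real mu * lam)"
    using v CSc unfolding eigenvector_def by auto
  hence "complex_of_real mu * lam \<in> spectrum CS" unfolding spectrum_def eigenvalue_def by auto
  hence "norm (complex_of_real mu * lam) \<le> spec_rad S"
    using spectral_radius_mem_max(2)[OF CSc n] unfolding spec_rad_def CS_def by auto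
  hence "mu * norm lam \<le> spec_rad S" using mu0 by (simp add: norm_mult)
  hence "mu * norm lam < mu * 1" using mu by simp
  thus ?thesis using sr mu0 by (simp only: mult_less_cancel_left_pos)
qed


lemma rayleigh:
  fixes S :: "real mat"
  assumes S: "S \<in> carrier_mat n n" and St: "transpose_mat S = S" and n: "n > 0"
  shows "ipf n x (mvf n (\<lambda>i j. S $$ (i,j)) x) \<le> spec_rad S * ipf n x x"
proof (rule ccontr)
  let ?sm = "\<lambda>i j. S $$ (i,j)"
  define rho where "rho = spec_rad S"
  define N where "N = ipf n x x"
  define y where "y k = (mvf n ?sm ^^ k) x" for k
  define a where "a k = ipf n x (y k)" for k
  assume "\<not> ?thesis"
  hence a1: "a 1 > rho * N" unfolding a_def y_def rho_def N_def by simp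
  have rho0: "rho \<ge> 0" unfolding rho_def by (rule spec_rad_nonneg[OF S n])
  have N0: "N \<ge> 0" unfolding N_def by (rule ipf_nonneg)
  have "N \<noteq> 0"
  proof
    assume "N = 0"
    hence "\<And>i. i < n \<Longrightarrow> x i = 0" using ipf_zero unfolding N_def by blast
    hence "a 1 = 0" unfolding a_def ipf_def by simp
    thus False using a1 \<open>N = 0\<close> by simp
  qed
  hence Np: "N > 0" using N0 by simp
  define mu where "mu = a 1 / N"
  have mu_gt: "mu > rho" using a1 Np unfolding mu_def by (simp add: field_simps)
  have a1eq: "a 1 = mu * N" using Np unfolding mu_def by simp
  define mu' where "mu' = (rho + mu) / 2"
  have mu'1: "rho < mu'" "mu' < mu" "mu' > 0" using mu_gt rho0 unfolding mu'_def by auto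
  have sym: "\<And>i j. i < n \<Longrightarrow> j < n \<Longrightarrow> ?sm i j = ?sm j i"
  proof -
    fix i j assume "i < n" "j < n"
    hence "transpose_mat S $$ (i,j) = S $$ (j,i)" using S by simp
    thus "?sm i j = ?sm j i" using St by simp
  qed
  have ysuc: "y (Suc k) = mvf n ?sm (y k)" for k unfolding y_def by simp
  have shift: "ipf n (y p) (y q) = a (p + q)" for p q
  proof (induction p arbitrary: q)
    case 0 show ?case unfolding a_def by (simp add: y_def)
  next
    case (Suc p)
    have "ipf n (y (Suc p)) (y q) = ipf n (y p) (mvf n ?sm (y q))"
      unfolding ysuc by (rule ipf_sym[OF sym])
    also have "\<dots> = ipf n (y p) (y (Suc q))" unfolding ysuc ..
    also have "\<dots> = a (p + Suc q)" by (rule Suc.IH)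
    finally show ?case by simp
  qed
  have lower: "a (2 ^ m) \<ge> mu ^ (2 ^ m) * N" for m
  proof (induction m)
    case 0 show ?case using a1eq by simp
  next
    case (Suc m)
    have mu0: "mu > 0" using mu_gt rho0 by simp
    have nn: "0 \<le> mu ^ (2 ^ m) * N" using mu0 N0 by simp
    have "(a (2 ^ m))^2 \<le> N * ipf n (y (2^m)) (y (2^m))"
      unfolding a_def N_def by (rule ipf_CS)
    also have "ipf n (y (2^m)) (y (2^m)) = a (2 ^ Suc m)" unfolding shift by (simp add: mult_2)
    finally have c1: "(a (2 ^ m))^2 \<le> N * a (2 ^ Suc m)" .
    have "(mu ^ (2 ^ m) * N)^2 \<le> (a (2 ^ m))^2"
      using Suc.IH nn by (intro power_mono) auto
    hence "N * (mu ^ (2 ^ Suc m) * N) \<le> N * a (2 ^ Suc m)"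
      using c1 by (simp add: power2_eq_square power_mult power_add algebra_simps)
    thus ?case using Np by simp
  qed
  define T where "T = map_mat (\<lambda>a. complex_of_real (a / mu')) S"
  have Tc: "T \<in> carrier_mat n n" using S T_def by auto
  have srT: "spectral_radius T < 1"
    by (rule scaled_sr_less_1[OF S n _ T_def]) (use mu'1 rho_def in auto)
  obtain c where c: "\<And>k. norm_bound (T ^\<^sub>m k) c"
    using spectral_radius_jnf_norm_bound_less_1_upper_triangular[OF Tc srT] by auto
  have cb: "\<bar>Re ((T ^\<^sub>m k) $$ (i,j))\<bar> \<le> c" if "i < n" "j < n" for i j k
  proof -
    have "norm ((T ^\<^sub>m k) $$ (i,j)) \<le> c" using c[of k] that Tc unfolding norm_bound_def by auto
    thus ?thesis using abs_Re_le_cmod[of "(T ^\<^sub>m k) $$ (i,j)"] by simp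
  qed
  define X where "X = (\<Sum>j<n. \<bar>x j\<bar>)"
  have yb: "\<bar>y k i\<bar> \<le> mu' ^ k * (c * X)" if i: "i < n" for k i
  proof -
    have "y k i = mu' ^ k * (\<Sum>j<n. Re ((T ^\<^sub>m k) $$ (i,j)) * x j)"
      unfolding y_def by (rule powers_repr[OF S _ T_def i]) (use mu'1 in simp)
    also have "\<bar>\<dots>\<bar> = mu' ^ k * \<bar>\<Sum>j<n. Re ((T ^\<^sub>m k) $$ (i,j)) * x j\<bar>"
      using mu'1 by (simp add: abs_mult)
    also have "\<bar>\<Sum>j<n. Re ((T ^\<^sub>m k) $$ (i,j)) * x j\<bar> \<le> (\<Sum>j<n. c * \<bar>x j\<bar>)"
      by (rule order_trans[OF sum_abs]) (auto intro!: sum_mono mult_right_mono cb i simp: abs_mult)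
    finally show ?thesis using mu'1 unfolding X_def
      by (simp add: sum_distrib_left mult_left_mono)
  qed
  have upper: "a k \<le> mu' ^ k * (c * X * X)" for k
  proof -
    have "a k \<le> (\<Sum>i<n. \<bar>x i\<bar> * (mu' ^ k * (c * X)))"
      unfolding a_def ipf_def
      by (rule sum_mono, rule order_trans[OF abs_ge_self], simp add: abs_mult,
          rule mult_left_mono[OF yb]) auto
    also have "\<dots> = X * (mu' ^ k * (c * X))" unfolding X_def by (rule sum_distrib_right[symmetric])
    also have "\<dots> = mu' ^ k * (c * X * X)" by (simp add: algebra_simps)
    finally show ?thesis .
  qed
  define q where "q = mu / mu'"
  have q1: "q > 1" using mu'1 unfolding q_def by simp
  obtain m where m: "c * X * X / N < q ^ m" using real_arch_pow[OF q1] by blast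
  have "q ^ m \<le> q ^ (2 ^ m)" using q1 by (intro power_increasing) (auto intro: less_imp_le less_exp)
  have "mu ^ (2 ^ m) * N \<le> mu' ^ (2 ^ m) * (c * X * X)"
    using lower[of m] upper[of "2 ^ m"] by simp
  hence "q ^ (2 ^ m) * N \<le> c * X * X"
    using mu'1 unfolding q_def by (simp add: power_divide field_simps)
  hence "q ^ (2 ^ m) \<le> c * X * X / N" using Np by (simp add: field_simps)
  thus False using m \<open>q ^ m \<le> q ^ (2 ^ m)\<close> by simp
qed


lemma skew_quad:
  assumes "\<And>i j. i < n \<Longrightarrow> j < n \<Longrightarrow> m j i = - m i j"
  shows "ipf n f (mvf n m f) = 0"
proof -
  have "ipf n f (mvf n m f) = (\<Sum>i<n. \<Sum>j<n. f i * m i j * f j)"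
    unfolding ipf_def mvf_def by (simp add: sum_distrib_left mult.assoc)
  also have "\<dots> = (\<Sum>j<n. \<Sum>i<n. f i * m i j * f j)" by (rule sum.swap)
  also have "\<dots> = (\<Sum>j<n. \<Sum>i<n. - (f j * m j i * f i))"
  proof (intro sum.cong refl)
    fix j i assume "j \<in> {..<n}" "i \<in> {..<n}"
    hence "m i j = - m j i" using assms[of j i] by simp
    thus "f i * m i j * f j = - (f j * m j i * f i)" by simp
  qed
  also have "\<dots> = - (\<Sum>j<n. \<Sum>i<n. f j * m j i * f i)" by (simp add: sum_negf)
  finally have "(\<Sum>i<n. \<Sum>j<n. f i * m i j * f j) = - (\<Sum>i<n. \<Sum>j<n. f i * m i j * f j)"
    using \<open>ipf n f (mvf n m f) = _\<close> by simp
  hence "(\<Sum>i<n. \<Sum>j<n. f i * m i j * f j) = 0" by simp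
  thus ?thesis unfolding ipf_def mvf_def by (simp add: sum_distrib_left mult.assoc)
qed

theorem corollary3:
  fixes S K :: "real mat" and n :: nat
  assumes "n > 0"
    and "S \<in> carrier_mat n n" and "K \<in> carrier_mat n n"
    and "transpose_mat S = S"
    and "nonneg_mat S"
    and "irreducible_mat S"
    and "transpose_mat K = - K"
    and "det K \<noteq> 0"
    and "nonneg_mat (S + K)"
  shows "even n \<and>
    \<not> (\<exists>c. \<forall>t\<in>{0..1::real}.
          spec_rad ((1 - t) \<cdot>\<^sub>m (S + K) + t \<cdot>\<^sub>m transpose_mat (S + K)) = c)"
proof
  note n = assms(1) and Sc = assms(2) and Kc = assms(3) and St = assms(4) and Snn = assms(5)
    and irr = assms(6) and Kt = assms(7) and detK = assms(8) and Ann = assms(9)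
  have Ssym: "S $$ (j,i) = S $$ (i,j)" if "i < n" "j < n" for i j
  proof -
    have "transpose_mat S $$ (i,j) = S $$ (j,i)" using Sc that by simp
    thus ?thesis using St by simp
  qed
  have Kskew: "K $$ (j,i) = - K $$ (i,j)" if "i < n" "j < n" for i j
  proof -
    have "transpose_mat K $$ (i,j) = K $$ (j,i)" using Kc that by simp
    thus ?thesis using Kt Kc that by simp
  qed
  show "even n"
  proof (rule ccontr)
    assume odd: "\<not> even n"
    have "-K = (-1) \<cdot>\<^sub>m K" by (rule eq_matI) auto
    have "det K = det (transpose_mat K)" using det_transpose[OF Kc] by simp
    also have "\<dots> = det ((-1) \<cdot>\<^sub>m K)" using Kt \<open>-K = _\<close> by simp
    also have "\<dots> = - det K" using odd Kc by simp
    finally show False using detK by simp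
  qed
  show "\<not> (\<exists>c. \<forall>t\<in>{0..1::real}.
          spec_rad ((1 - t) \<cdot>\<^sub>m (S + K) + t \<cdot>\<^sub>m transpose_mat (S + K)) = c)"
  proof
    assume "\<exists>c. \<forall>t\<in>{0..1::real}.
          spec_rad ((1 - t) \<cdot>\<^sub>m (S + K) + t \<cdot>\<^sub>m transpose_mat (S + K)) = c"
    then obtain c where c: "\<And>t. t \<in> {0..1::real} \<Longrightarrow>
          spec_rad ((1 - t) \<cdot>\<^sub>m (S + K) + t \<cdot>\<^sub>m transpose_mat (S + K)) = c" by blast
    define A where "A = S + K"
    have Ac: "A \<in> carrier_mat n n" using Sc Kc A_def by auto
    have Aij: "A $$ (i,j) = S $$ (i,j) + K $$ (i,j)" if "i < n" "j < n" for i j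
      using that Sc Kc A_def by simp
    have M0: "(1 - 0) \<cdot>\<^sub>m A + (0::real) \<cdot>\<^sub>m transpose_mat A = A"
      by (rule eq_matI) (use Ac in auto)
    have Mh: "(1 - 1/2) \<cdot>\<^sub>m A + (1/2::real) \<cdot>\<^sub>m transpose_mat A = S"
    proof (rule eq_matI)
      fix i j assume "i < dim_row S" "j < dim_col S"
      hence ij: "i < n" "j < n" using Sc by auto
      show "((1 - 1/2) \<cdot>\<^sub>m A + (1/2::real) \<cdot>\<^sub>m transpose_mat A) $$ (i,j) = S $$ (i,j)"
      proof -
        have "((1 - 1/2) \<cdot>\<^sub>m A + (1/2::real) \<cdot>\<^sub>m transpose_mat A) $$ (i,j)
            = (1/2) * A $$ (i,j) + (1/2) * A $$ (j,i)"
          using ij Ac by simp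
        also have "\<dots> = (1/2) * (S $$ (i,j) + K $$ (i,j)) + (1/2) * (S $$ (i,j) + - K $$ (i,j))"
          by (simp only: Aij[OF ij] Aij[OF ij(2) ij(1)] Ssym[OF ij] Kskew[OF ij])
        also have "\<dots> = S $$ (i,j)" by (simp add: field_simps)
        finally show ?thesis .
      qed
    qed (use Ac Sc in auto)
    define rho where "rho = spec_rad S"
    have eqr: "spec_rad A = rho"
    proof -
      have "spec_rad (S + K) = c" using c[of 0] unfolding M0[unfolded A_def] by simp
      moreover have "spec_rad S = c" using c[of "1/2"] unfolding Mh[unfolded A_def] by simp
      ultimately show ?thesis unfolding rho_def A_def by simp
    qed
    define CA where "CA = map_mat complex_of_real A"
    have CAc: "CA \<in> carrier_mat n n" using Ac CA_def by auto
    from spectral_radius_mem_max(1)[OF CAc n] obtain lam where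
      lam: "lam \<in> spectrum CA" and sr: "spectral_radius CA = norm lam" by auto
    have normlam: "norm lam = rho" using sr eqr unfolding spec_rad_def CA_def by simp
    from lam obtain z where "eigenvector CA z lam" unfolding spectrum_def eigenvalue_def by auto
    hence z: "z \<in> carrier_vec n" "z \<noteq> 0\<^sub>v n" "CA *\<^sub>v z = lam \<cdot>\<^sub>v z"
      using CAc unfolding eigenvector_def by auto
    define u where "u i = norm (z $ i)" for i
    let ?sm = "\<lambda>i j. S $$ (i,j)"
    let ?km = "\<lambda>i j. K $$ (i,j)"
    let ?am = "\<lambda>i j. A $$ (i,j)"
    have Anonneg: "A $$ (i,j) \<ge> 0" if "i < n" "j < n" for i j
    proof -
      have "0 \<le> S $$ (i,j) + K $$ (i,j)" using Ann that Kc unfolding nonneg_mat_def by auto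
      thus ?thesis using Aij[OF that] by simp
    qed
    have Snonneg: "S $$ (i,j) \<ge> 0" if "i < n" "j < n" for i j
      using Snn that Sc unfolding nonneg_mat_def by auto
    have Au: "mvf n ?am u i \<ge> rho * u i" if i: "i < n" for i
    proof -
      have "(CA *\<^sub>v z) $ i = lam * z $ i" using z i by simp
      moreover have "(CA *\<^sub>v z) $ i = (\<Sum>j<n. complex_of_real (A $$ (i,j)) * z $ j)"
        using i Ac z(1) CA_def by (simp add: scalar_prod_def lessThan_atLeast0)
      ultimately have "rho * u i = norm (\<Sum>j<n. complex_of_real (A $$ (i,j)) * z $ j)"
        using normlam unfolding u_def by (simp add: norm_mult)
      also have "\<dots> \<le> (\<Sum>j<n. norm (complex_of_real (A $$ (i,j)) * z $ j))" by (rule norm_sum)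
      also have "\<dots> = mvf n ?am u i" unfolding mvf_def u_def
        using Anonneg i by (intro sum.cong refl) (simp add: norm_mult)
      finally show ?thesis .
    qed
    obtain i0 where i0: "i0 < n" "u i0 \<noteq> 0"
    proof -
      have "\<exists>i<n. z $ i \<noteq> 0"
      proof (rule ccontr)
        assume "\<not> ?thesis"
        hence "z = 0\<^sub>v n" using z(1) by (intro eq_vecI) auto
        thus False using z(2) by simp
      qed
      thus ?thesis using that unfolding u_def by auto
    qed
    have u0: "u i \<ge> 0" for i unfolding u_def by simp
    have amsplit: "mvf n ?am f i = mvf n ?sm f i + mvf n ?km f i" if "i < n" for f i
    proof -
      have "mvf n ?am f i = (\<Sum>j<n. S $$ (i,j) * f j + K $$ (i,j) * f j)"
        unfolding mvf_def using that Aij by (intro sum.cong refl) (simp add: distrib_right)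
      thus ?thesis unfolding mvf_def by (simp add: sum.distrib)
    qed
    have Kq: "ipf n f (mvf n ?km f) = 0" for f
      by (rule skew_quad) (rule Kskew)
    have "ipf n u (mvf n ?am u) = ipf n u (mvf n ?sm u) + ipf n u (mvf n ?km u)"
    proof -
      have "ipf n u (mvf n ?am u) = (\<Sum>i<n. u i * mvf n ?sm u i + u i * mvf n ?km u i)"
        unfolding ipf_def using amsplit by (intro sum.cong refl) (simp add: distrib_left)
      thus ?thesis unfolding ipf_def by (simp add: sum.distrib)
    qed
    hence qA: "ipf n u (mvf n ?am u) = ipf n u (mvf n ?sm u)" using Kq by simp
    have "rho * ipf n u u \<le> ipf n u (mvf n ?am u)"
      unfolding ipf_def sum_distrib_left
    proof (rule sum_mono)
      fix i assume "i \<in> {..<n}"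
      hence "u i * (rho * u i) \<le> u i * mvf n ?am u i"
        using Au u0 by (intro mult_left_mono) auto
      thus "rho * (u i * u i) \<le> u i * mvf n ?am u i" by (simp add: mult.left_commute)
    qed
    hence ge: "ipf n u (mvf n ?sm u) \<ge> rho * ipf n u u" using qA by simp
    have le: "ipf n f (mvf n ?sm f) \<le> rho * ipf n f f" for f
      unfolding rho_def by (rule rayleigh[OF Sc St n])
    define mm where "mm i j = (if i = j then rho else 0) - S $$ (i,j)" for i j
    have mmv: "mvf n mm f i = rho * f i - mvf n ?sm f i" if "i < n" for f i
    proof -
      have "mvf n mm f i = (\<Sum>j<n. (if i = j then rho * f j else 0) - S $$ (i,j) * f j)"
        unfolding mvf_def mm_def by (intro sum.cong refl) (simp add: left_diff_distrib)
      also have "\<dots> = (\<Sum>j<n. (if i = j then rho * f j else 0)) - mvf n ?sm f i"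
        unfolding mvf_def by (simp only: sum_subtractf)
      also have "\<dots> = rho * f i - mvf n ?sm f i" using that by simp
      finally show ?thesis .
    qed
    have mmq: "ipf n f (mvf n mm f) = rho * ipf n f f - ipf n f (mvf n ?sm f)" for f
    proof -
      have "ipf n f (mvf n mm f) = (\<Sum>i<n. rho * (f i * f i) - f i * mvf n ?sm f i)"
        unfolding ipf_def by (intro sum.cong refl) (simp add: mmv algebra_simps)
      thus ?thesis unfolding ipf_def by (simp add: sum_subtractf sum_distrib_left)
    qed
    have Su: "mvf n ?sm u i = rho * u i" if i: "i < n" for i
    proof -
      have "mvf n mm u i = 0"
      proof (rule psd_kernel[OF _ _ _ i])
        show "mm i j = mm j i" if "i < n" "j < n" for i j
          unfolding mm_def using Ssym[OF that] by auto
        show "0 \<le> ipf n f (mvf n mm f)" for f using mmq le[of f] by simp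
        show "ipf n u (mvf n mm u) = 0" using mmq ge le[of u] by simp
      qed
      thus ?thesis using mmv[OF i] by simp
    qed
    have upos: "u i > 0" if i: "i < n" for i
    proof (rule ccontr)
      assume "\<not> u i > 0"
      hence ui: "u i = 0" using u0[of i] by simp
      define I where "I = {k. k < n \<and> u k = 0}"
      have I1: "I \<noteq> {}" using ui i unfolding I_def by blast
      have "i0 \<notin> I" using i0 unfolding I_def by blast
      moreover have "I \<subseteq> {0..<n}" unfolding I_def by auto
      ultimately have I2: "I \<subset> {0..<n}" using i0(1) by auto
      have I3: "\<forall>k\<in>I. \<forall>j\<in>{0..<n} - I. S $$ (k,j) = 0"
      proof (intro ballI)
        fix k j assume k: "k \<in> I" and j: "j \<in> {0..<n} - I"
        have kn: "k < n" "u k = 0" using k unfolding I_def by auto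
        have jn0: "j < n" "u j \<noteq> 0" using j unfolding I_def by auto
        have jn: "u j > 0" using u0[of j] jn0(2) by linarith
        have "mvf n ?sm u k = 0" using Su[OF kn(1)] kn(2) by simp
        hence "(\<Sum>l<n. S $$ (k,l) * u l) = 0" unfolding mvf_def .
        hence "\<forall>l\<in>{..<n}. S $$ (k,l) * u l = 0"
          by (subst (asm) sum_nonneg_eq_0_iff) (use Snonneg kn(1) u0 in auto)
        hence "S $$ (k,j) * u j = 0" using jn0(1) by auto
        thus "S $$ (k,j) = 0" using jn by simp
      qed
      have dS: "dim_row S = n" using Sc by simp
      have "\<exists>I. I \<noteq> {} \<and> I \<subset> {0..<dim_row S} \<and>
            (\<forall>i\<in>I. \<forall>j\<in>{0..<dim_row S} - I. S $$ (i,j) = 0)"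
        unfolding dS using I1 I2 I3 by blast
      thus False using irr unfolding irreducible_mat_def by blast
    qed
    have Ku0: "mvf n ?km u i = 0" if i: "i < n" for i
    proof -
      have Kge: "mvf n ?km u k \<ge> 0" if "k < n" for k
        using amsplit[OF that, of u] Au[OF that] Su[OF that] by simp
      have "ipf n u (mvf n ?km u) = 0" by (rule Kq)
      hence "\<forall>k\<in>{..<n}. u k * mvf n ?km u k = 0" unfolding ipf_def
        by (subst (asm) sum_nonneg_eq_0_iff) (use Kge u0 in auto)
      hence "u i * mvf n ?km u i = 0" using i by blast
      thus ?thesis using upos[OF i] by simp
    qed
    define v where "v = vec n u"
    have "K *\<^sub>v v = 0\<^sub>v n"
    proof (rule eq_vecI)
      fix i assume "i < dim_vec (0\<^sub>v n :: real vec)"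
      hence i: "i < n" by simp
      have "(K *\<^sub>v v) $ i = mvf n ?km u i"
        using i Kc unfolding v_def mvf_def by (simp add: scalar_prod_def lessThan_atLeast0)
      thus "(K *\<^sub>v v) $ i = 0\<^sub>v n $ i" using Ku0[OF i] i by simp
    qed (use Kc in simp)
    moreover have "v \<noteq> 0\<^sub>v n"
    proof
      assume "v = 0\<^sub>v n"
      hence "v $ i0 = 0" using i0 by simp
      thus False using i0 unfolding v_def by simp
    qed
    moreover have "v \<in> carrier_vec n" unfolding v_def by simp
    ultimately have "det K = 0" using det_0_iff_vec_prod_zero[OF Kc] by blast
    thus False using detK by simp
  qed
qed

end
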